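(* (i) Let $\mathcal G$ be a complex Lie algebra with subalgebra $\mathcal H$ and bilinear form $(\cdot,\cdot)$ satisfying GR1–GR3. Then $(\alpha,\delta)=0$ for all $\alpha\in R$ and $\delta\in R^0$. (ii) Let $(\mathcal G,(\cdot,\cdot),\mathcal H)$ be a generalized reductive Lie algebra. Then $\delta\in R^0$ is isolated if and only if $\mathcal G_\delta\subseteq C_{\mathcal G}(\mathcal G_c)$, the centralizer of the core in $\mathcal G$.
   Context: (GR1) $(\cdot,\cdot)$ is symmetric, nondegenerate and invariant on $\mathcal G$. (GR2) $\mathcal H$ is a nontrivial finite-dimensional abelian subalgebra equal to its centralizer in $\mathcal G$, and $\mathrm{ad}(h)$ is diagonalizable for all $h\in\mathcal H$. Then $\mathcal G=\bigoplus_{\alpha\in\mathcal H^*}\mathcal G_\alpha$, $\mathcal G_\alpha=\{x:[h,x]=\alpha(h)x\ \forall h\in\mathcal H\}$, root system $R=\{\alpha:\mathcal G_\alpha\ne0\}$; the form is nondegenerate on $\mathcal H$; $t_\alpha\in\mathcal H$ with $(t_\alpha,h)=\alpha(h)$ for all $h$; $(\alpha,\beta):=(t_\alpha,t_\beta)$; $R^\times=\{\alpha\in R:(\alpha,\alpha)\ne0\}$, $R^0=\{\alpha\in R:(\alpha,\alpha)=0\}$. (GR3) for $\alpha\in R^\times$, $x\in\mathcal G_\alpha$, $\mathrm{ad}(x)$ is locally nilpotent on $\mathcal G$. (GR4) $R$ is discrete in $\mathcal H^*$. (GR5) $R^\times\ne\emptyset$. A generalized reductive Lie algebra is a triple satisfying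 GR1–GR5. The core $\mathcal G_c$ is the subalgebra generated by $\mathcal G_\alpha$, $\alpha\in R^\times$. A root $\delta\in R^0$ is isolated if $\delta+\alpha\notin R$ for every $\alpha\in R^\times$. *)

theory Defs
  imports Complex_Main
begin

definition lie_algebra :: "(complex \<Rightarrow> 'g::ab_group_add \<Rightarrow> 'g) \<Rightarrow> ('g \<Rightarrow> 'g \<Rightarrow> 'g) \<Rightarrow> bool" where
  "lie_algebra sc br \<longleftrightarrow> vector_space sc
     \<and> (\<forall>x. Vector_Spaces.linear sc sc (br x))
     \<and> (\<forall>y. Vector_Spaces.linear sc sc (\<lambda>x. br x y))
     \<and> (\<forall>x. br x x = 0)
     \<and> (\<forall>x y z. br x (br y z) + br y (br z x) + br z (br x y) = 0)"

definition lie_subalgebra :: "(complex \<Rightarrow> 'g::ab_group_add \<Rightarrow> 'g) \<Rightarrow> ('g \<Rightarrow> 'g \<Rightarrow> 'g) \<Rightarrow> 'g set \<Rightarrow> bool" where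
  "lie_subalgebra sc br S \<longleftrightarrow> module.subspace sc S \<and> (\<forall>x\<in>S. \<forall>y\<in>S. br x y \<in> S)"

definition generated_subalgebra :: "(complex \<Rightarrow> 'g::ab_group_add \<Rightarrow> 'g) \<Rightarrow> ('g \<Rightarrow> 'g \<Rightarrow> 'g) \<Rightarrow> 'g set \<Rightarrow> 'g set" where
  "generated_subalgebra sc br X = \<Inter> {S. lie_subalgebra sc br S \<and> X \<subseteq> S}"

definition centralizer :: "('g \<Rightarrow> 'g \<Rightarrow> 'g::ab_group_add) \<Rightarrow> 'g set \<Rightarrow> 'g set" where
  "centralizer br S = {x. \<forall>y\<in>S. br x y = 0}"

definition GR1 :: "(complex \<Rightarrow> 'g::ab_group_add \<Rightarrow> 'g) \<Rightarrow> ('g \<Rightarrow> 'g \<Rightarrow> 'g) \<Rightarrow> ('g \<Rightarrow> 'g \<Rightarrow> complex) \<Rightarrow> bool" where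
  "GR1 sc br B \<longleftrightarrow>
     (\<forall>x. Vector_Spaces.linear sc ((*)) (B x))
     \<and> (\<forall>y. Vector_Spaces.linear sc ((*)) (\<lambda>x. B x y))
     \<and> (\<forall>x y. B x y = B y x)
     \<and> (\<forall>x. (\<forall>y. B x y = 0) \<longrightarrow> x = 0)
     \<and> (\<forall>x y z. B (br x y) z = B x (br y z))"

definition GR2 :: "(complex \<Rightarrow> 'g::ab_group_add \<Rightarrow> 'g) \<Rightarrow> ('g \<Rightarrow> 'g \<Rightarrow> 'g) \<Rightarrow> 'g set \<Rightarrow> bool" where
  "GR2 sc br H \<longleftrightarrow>
     lie_subalgebra sc br H
     \<and> H \<noteq> {0}
     \<and> (\<exists>S. finite S \<and> S \<subseteq> H \<and> module.span sc S = H)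
     \<and> (\<forall>h\<in>H. \<forall>k\<in>H. br h k = 0)
     \<and> centralizer br H = H
     \<and> (\<forall>h\<in>H. module.span sc {x. \<exists>c. br h x = sc c x} = UNIV)"

text \<open>Elements of the dual space H^*: linear functionals on H, normalised to vanish off H
  (so that each element of H^* has exactly one representative).\<close>
definition dual_space :: "(complex \<Rightarrow> 'g::ab_group_add \<Rightarrow> 'g) \<Rightarrow> 'g set \<Rightarrow> ('g \<Rightarrow> complex) set" where
  "dual_space sc H = {\<alpha>. (\<forall>h\<in>H. \<forall>k\<in>H. \<alpha> (h + k) = \<alpha> h + \<alpha> k)
                       \<and> (\<forall>c. \<forall>h\<in>H. \<alpha> (sc c h) = c * \<alpha> h)
                       \<and> (\<forall>x. x \<notin> H \<longrightarrow> \<alpha> x = 0)}"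

definition root_space :: "(complex \<Rightarrow> 'g::ab_group_add \<Rightarrow> 'g) \<Rightarrow> ('g \<Rightarrow> 'g \<Rightarrow> 'g) \<Rightarrow> 'g set \<Rightarrow> ('g \<Rightarrow> complex) \<Rightarrow> 'g set" where
  "root_space sc br H \<alpha> = {x. \<forall>h\<in>H. br h x = sc (\<alpha> h) x}"

definition roots :: "(complex \<Rightarrow> 'g::ab_group_add \<Rightarrow> 'g) \<Rightarrow> ('g \<Rightarrow> 'g \<Rightarrow> 'g) \<Rightarrow> 'g set \<Rightarrow> ('g \<Rightarrow> complex) set" where
  "roots sc br H = {\<alpha> \<in> dual_space sc H. root_space sc br H \<alpha> \<noteq> {0}}"

definition tvec :: "('g \<Rightarrow> 'g \<Rightarrow> complex) \<Rightarrow> 'g set \<Rightarrow> ('g \<Rightarrow> complex) \<Rightarrow> 'g" where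
  "tvec B H \<alpha> = (THE t. t \<in> H \<and> (\<forall>h\<in>H. B t h = \<alpha> h))"

definition root_form :: "('g \<Rightarrow> 'g \<Rightarrow> complex) \<Rightarrow> 'g set \<Rightarrow> ('g \<Rightarrow> complex) \<Rightarrow> ('g \<Rightarrow> complex) \<Rightarrow> complex" where
  "root_form B H \<alpha> \<beta> = B (tvec B H \<alpha>) (tvec B H \<beta>)"

definition nonisotropic_roots where
  "nonisotropic_roots sc br B H = {\<alpha> \<in> roots sc br H. root_form B H \<alpha> \<alpha> \<noteq> 0}"

definition isotropic_roots where
  "isotropic_roots sc br B H = {\<alpha> \<in> roots sc br H. root_form B H \<alpha> \<alpha> = 0}"

definition GR3 :: "(complex \<Rightarrow> 'g::ab_group_add \<Rightarrow> 'g) \<Rightarrow> ('g \<Rightarrow> 'g \<Rightarrow> 'g) \<Rightarrow> ('g \<Rightarrow> 'g \<Rightarrow> complex) \<Rightarrow> 'g set \<Rightarrow> bool" where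
  "GR3 sc br B H \<longleftrightarrow>
     (\<forall>\<alpha>\<in>nonisotropic_roots sc br B H. \<forall>x\<in>root_space sc br H \<alpha>. \<forall>y. \<exists>n. (br x ^^ n) y = 0)"

text \<open>(GR4): R is discrete in H^*.  H^* is finite dimensional and carries its unique
  vector space topology, which is the weak topology of evaluations at elements of H;
  discreteness of R means each root has a neighbourhood containing no other root.\<close>
definition GR4 :: "(complex \<Rightarrow> 'g::ab_group_add \<Rightarrow> 'g) \<Rightarrow> ('g \<Rightarrow> 'g \<Rightarrow> 'g) \<Rightarrow> 'g set \<Rightarrow> bool" where
  "GR4 sc br H \<longleftrightarrow>
     (\<forall>\<alpha>\<in>roots sc br H. \<exists>S \<epsilon>. finite S \<and> S \<subseteq> H \<and> \<epsilon> > 0 \<and>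
        (\<forall>\<beta>\<in>roots sc br H. \<beta> \<noteq> \<alpha> \<longrightarrow> (\<exists>h\<in>S. \<epsilon> \<le> cmod (\<beta> h - \<alpha> h))))"

definition GR5 :: "(complex \<Rightarrow> 'g::ab_group_add \<Rightarrow> 'g) \<Rightarrow> ('g \<Rightarrow> 'g \<Rightarrow> 'g) \<Rightarrow> ('g \<Rightarrow> 'g \<Rightarrow> complex) \<Rightarrow> 'g set \<Rightarrow> bool" where
  "GR5 sc br B H \<longleftrightarrow> nonisotropic_roots sc br B H \<noteq> {}"

definition generalized_reductive where
  "generalized_reductive sc br B H \<longleftrightarrow> lie_algebra sc br \<and> GR1 sc br B \<and> GR2 sc br H
     \<and> GR3 sc br B H \<and> GR4 sc br H \<and> GR5 sc br B H"

definition core where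
  "core sc br B H = generated_subalgebra sc br
      (\<Union>\<alpha>\<in>nonisotropic_roots sc br B H. root_space sc br H \<alpha>)"

definition isolated_root where
  "isolated_root sc br B H \<delta> \<longleftrightarrow> \<delta> \<in> isotropic_roots sc br B H \<and>
     (\<forall>\<alpha>\<in>nonisotropic_roots sc br B H. (\<lambda>x. \<delta> x + \<alpha> x) \<notin> roots sc br H)"

end

theory Submission
  imports Defs "HOL-Library.Function_Algebras"
begin

definition fscale :: "complex \<Rightarrow> ('g \<Rightarrow> complex) \<Rightarrow> ('g \<Rightarrow> complex)" where
  "fscale c f = (\<lambda>x. c * f x)"

lemma fscale_apply[simp]: "fscale c f x = c * f x" by (simp add: fscale_def)

lemma VF: "vector_space fscale"
  by unfold_locales (auto simp: fscale_def fun_eq_iff algebra_simps)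

lemma sum_fun_apply: "(sum F A) x = (\<Sum>a\<in>A. F a x)"
  by (induction A rule: infinite_finite_induct) auto

locale GRL =
  fixes sc :: "complex \<Rightarrow> 'g::ab_group_add \<Rightarrow> 'g"
    and br :: "'g \<Rightarrow> 'g \<Rightarrow> 'g"
    and B :: "'g \<Rightarrow> 'g \<Rightarrow> complex"
    and H :: "'g set"
  assumes LA: "lie_algebra sc br" and G1: "GR1 sc br B" and G2: "GR2 sc br H"
begin

sublocale V: vector_space sc using LA unfolding lie_algebra_def by auto

lemma br_lin_r: "module_hom sc sc (br x)"
  using LA unfolding lie_algebra_def module_hom_iff_linear by auto
lemma br_lin_l: "module_hom sc sc (\<lambda>x. br x y)"
  using LA unfolding lie_algebra_def module_hom_iff_linear by auto

lemma br_add_r: "br x (y + z) = br x y + br x z"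
  using module_hom.add[OF br_lin_r] .
lemma br_add_l: "br (x + y) z = br x z + br y z"
  using module_hom.add[OF br_lin_l] .
lemma br_scale_r: "br x (sc c y) = sc c (br x y)"
  using module_hom.scale[OF br_lin_r] .
lemma br_scale_l: "br (sc c x) y = sc c (br x y)"
  using module_hom.scale[OF br_lin_l] .
lemma br_zero_r[simp]: "br x 0 = 0"
  using module_hom.zero[OF br_lin_r] .
lemma br_zero_l[simp]: "br 0 y = 0"
  using module_hom.zero[OF br_lin_l] .
lemma br_sum_r: "br x (sum f A) = (\<Sum>a\<in>A. br x (f a))"
  using module_hom.sum[OF br_lin_r] .
lemma br_sum_l: "br (sum f A) y = (\<Sum>a\<in>A. br (f a) y)"
  using module_hom.sum[OF br_lin_l] .
lemma br_neg_r: "br x (- y) = - br x y"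
  using module_hom.neg[OF br_lin_r] .
lemma br_neg_l: "br (- x) y = - br x y"
  using module_hom.neg[OF br_lin_l] .
lemma br_diff_r: "br x (y - z) = br x y - br x z"
  using module_hom.diff[OF br_lin_r] .

lemma br_self[simp]: "br x x = 0"
  using LA unfolding lie_algebra_def by auto

lemma br_anti: "br x y = - br y x"
proof -
  have "0 = br (x + y) (x + y)" by simp
  also have "\<dots> = br x y + br y x" unfolding br_add_l br_add_r by simp
  finally have "0 = br x y + br y x" .
  thus ?thesis by (metis eq_neg_iff_add_eq_0)
qed

lemma jac: "br e (br f z) = br f (br e z) + br (br e f) z"
proof -
  have "br e (br f z) + br f (br z e) + br z (br e f) = 0"
    using LA unfolding lie_algebra_def by auto
  moreover have "br f (br z e) = - br f (br e z)" by (metis br_anti br_neg_r)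
  moreover have "br z (br e f) = - br (br e f) z" by (metis br_anti)
  ultimately show ?thesis by (simp add: algebra_simps eq_neg_iff_add_eq_0)
qed

lemma B_lin_r: "module_hom sc (*) (B x)"
  using G1 unfolding GR1_def module_hom_iff_linear by auto
lemma B_lin_l: "module_hom sc (*) (\<lambda>x. B x y)"
  using G1 unfolding GR1_def module_hom_iff_linear by auto
lemma B_add_r: "B x (y + z) = B x y + B x z"
  using module_hom.add[OF B_lin_r] .
lemma B_add_l: "B (x + y) z = B x z + B y z"
  using module_hom.add[OF B_lin_l] .
lemma B_scale_r: "B x (sc c y) = c * B x y"
  using module_hom.scale[OF B_lin_r] .
lemma B_scale_l: "B (sc c x) y = c * B x y"
  using module_hom.scale[OF B_lin_l] .
lemma B_zero_r[simp]: "B x 0 = 0"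
  using module_hom.zero[OF B_lin_r] .
lemma B_zero_l[simp]: "B 0 y = 0"
  using module_hom.zero[OF B_lin_l] .
lemma B_sum_r: "B x (sum f A) = (\<Sum>a\<in>A. B x (f a))"
  using module_hom.sum[OF B_lin_r] .
lemma B_neg_r: "B x (- y) = - B x y"
  using module_hom.neg[OF B_lin_r] .
lemma B_neg_l: "B (- x) y = - B x y"
  using module_hom.neg[OF B_lin_l] .
declare br_neg_r[simp] br_neg_l[simp] br_scale_r[simp] br_scale_l[simp]
  B_scale_l[simp] B_scale_r[simp] B_neg_l[simp] B_neg_r[simp]

lemma B_sym: "B x y = B y x"
  using G1 unfolding GR1_def by auto
lemma B_nondeg: "(\<And>y. B x y = 0) \<Longrightarrow> x = 0"
  using G1 unfolding GR1_def by auto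
lemma B_inv: "B (br x y) z = B x (br y z)"
  using G1 unfolding GR1_def by auto

lemma H_sub: "V.subspace H"
  using G2 unfolding GR2_def lie_subalgebra_def by auto
lemma H_ne: "H \<noteq> {0}"
  using G2 unfolding GR2_def by auto
lemma H_span: "\<exists>S. finite S \<and> S \<subseteq> H \<and> V.span S = H"
  using G2 unfolding GR2_def by auto
lemma H_ab: "h \<in> H \<Longrightarrow> k \<in> H \<Longrightarrow> br h k = 0"
  using G2 unfolding GR2_def by auto
lemma H_cent: "centralizer br H = H"
  using G2 unfolding GR2_def by auto
lemma H_diag: "h \<in> H \<Longrightarrow> V.span {x. \<exists>c. br h x = sc c x} = UNIV"
  using G2 unfolding GR2_def by auto


abbreviation G where "G a \<equiv> root_space sc br H a"

lemma G_mem: "x \<in> G a \<longleftrightarrow> (\<forall>h\<in>H. br h x = sc (a h) x)"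
  unfolding root_space_def by auto

lemma G_sub: "V.subspace (G a)"
  unfolding V.subspace_def root_space_def
  by (auto simp: br_add_r br_scale_r V.scale_right_distrib mult.commute)

lemma G_zero[simp]: "0 \<in> G a"
  using G_sub V.subspace_0 by blast

lemma G_br: assumes "x \<in> G b" "z \<in> G a" shows "br x z \<in> G (\<lambda>h. b h + a h)"
  unfolding G_mem
proof
  fix h assume h: "h \<in> H"
  have "br h (br x z) = br x (br h z) + br (br h x) z" by (rule jac)
  also have "\<dots> = sc (a h) (br x z) + sc (b h) (br x z)"
    using assms h by (simp add: G_mem br_scale_r br_scale_l)
  also have "\<dots> = sc (b h + a h) (br x z)" by (simp add: V.scale_left_distrib)
  finally show "br h (br x z) = sc (b h + a h) (br x z)" .
qed

lemma H_0[simp]: "0 \<in> H" using H_sub V.subspace_0 by blast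
lemma H_add: "h \<in> H \<Longrightarrow> k \<in> H \<Longrightarrow> h + k \<in> H" using H_sub V.subspace_add by blast
lemma H_scale: "h \<in> H \<Longrightarrow> sc c h \<in> H" using H_sub V.subspace_scale by blast

lemma G0: "G (\<lambda>_. 0) = H"
proof -
  have "G (\<lambda>_. 0) = {x. \<forall>h\<in>H. br h x = 0}" unfolding root_space_def by simp
  also have "\<dots> = centralizer br H" unfolding centralizer_def
    by (auto, metis br_anti neg_equal_0_iff_equal, metis br_anti neg_equal_0_iff_equal)
  finally show ?thesis using H_cent by simp
qed

abbreviation D where "D \<equiv> dual_space sc H"

lemma dual_add_H: "\<alpha> \<in> D \<Longrightarrow> h \<in> H \<Longrightarrow> k \<in> H \<Longrightarrow> \<alpha> (h + k) = \<alpha> h + \<alpha> k"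
  unfolding dual_space_def by auto
lemma dual_scale_H: "\<alpha> \<in> D \<Longrightarrow> h \<in> H \<Longrightarrow> \<alpha> (sc c h) = c * \<alpha> h"
  unfolding dual_space_def by auto
lemma dual_out: "\<alpha> \<in> D \<Longrightarrow> x \<notin> H \<Longrightarrow> \<alpha> x = 0"
  unfolding dual_space_def by auto
lemma dual_zero[simp]: "\<alpha> \<in> D \<Longrightarrow> \<alpha> 0 = 0"
  using dual_scale_H[of \<alpha> 0 0] by simp

lemma dual_lin: "\<alpha> \<in> D \<Longrightarrow> \<beta> \<in> D \<Longrightarrow> (\<lambda>h. a * \<alpha> h + b * \<beta> h) \<in> D"
  unfolding dual_space_def by (auto simp: algebra_simps)
lemma dual_add: "\<alpha> \<in> D \<Longrightarrow> \<beta> \<in> D \<Longrightarrow> (\<lambda>h. \<alpha> h + \<beta> h) \<in> D"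
  using dual_lin[of \<alpha> \<beta> 1 1] by simp
lemma dual_neg: "\<alpha> \<in> D \<Longrightarrow> (\<lambda>h. - \<alpha> h) \<in> D"
  using dual_lin[of \<alpha> \<alpha> "-1" 0] by simp
lemma dual_zero_fun: "(\<lambda>_. 0) \<in> D"
  unfolding dual_space_def by auto

lemma B_orth: assumes "x \<in> G a" "y \<in> G b" "h \<in> H" "a h + b h \<noteq> 0" shows "B x y = 0"
proof -
  have "B (br h x) y = a h * B x y" using assms by (simp add: G_mem B_scale_l)
  moreover have "B (br h x) y = - B (br x h) y" by (metis br_anti B_neg_l)
  moreover have "B (br x h) y = b h * B x y" using assms by (simp add: G_mem B_inv B_scale_r)
  ultimately have e: "a h * B x y = - (b h * B x y)" by simp
  have "(a h + b h) * B x y = a h * B x y + b h * B x y" by (simp add: distrib_right)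
  also have "\<dots> = 0" using e by simp
  finally have "(a h + b h) * B x y = 0" .
  thus ?thesis using assms by simp
qed

lemma eig_indep:
  assumes "finite M" "\<forall>\<mu>\<in>M. br s (w \<mu>) = sc \<mu> (w \<mu>)" "sum w M = 0"
  shows "\<forall>\<mu>\<in>M. w \<mu> = 0"
  using assms
proof (induction M arbitrary: w rule: finite_induct)
  case empty thus ?case by simp
next
  case (insert a M)
  define w' where "w' \<mu> = sc (\<mu> - a) (w \<mu>)" for \<mu>
  have e: "\<forall>\<mu>\<in>M. br s (w' \<mu>) = sc \<mu> (w' \<mu>)"
    using insert.prems by (simp add: w'_def br_scale_r mult.commute)
  have sw: "sum w M = - w a" using insert by (simp add: eq_neg_iff_add_eq_0 add.commute)
  have "sum w' M = (\<Sum>\<mu>\<in>M. br s (w \<mu>) - sc a (w \<mu>))"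
    using insert.prems by (intro sum.cong) (auto simp: w'_def V.scale_left_diff_distrib)
  also have "\<dots> = br s (sum w M) - sc a (sum w M)"
    by (simp add: sum_subtractf br_sum_r V.scale_sum_right)
  also have "\<dots> = 0" using sw insert.prems by (simp add: br_neg_r V.scale_minus_right)
  finally have "\<forall>\<mu>\<in>M. w' \<mu> = 0" using insert.IH e by blast
  hence wM: "\<forall>\<mu>\<in>M. w \<mu> = 0" using insert.hyps by (auto simp: w'_def)
  hence "sum w M = 0" by simp
  hence "w a = 0" using sw by simp
  thus ?case using wM by simp
qed

lemma eig_B: assumes "x \<in> G \<delta>" "s \<in> H" "br s a = sc c a" "c \<noteq> - \<delta> s"
  shows "B x a = 0"
proof -
  have "B x (br s a) = c * B x a" using assms by (simp add: B_scale_r)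
  moreover have "B x (br s a) = - (\<delta> s * B x a)"
  proof -
    have "B x (br s a) = B (br x s) a" by (rule B_inv[symmetric])
    also have "\<dots> = B (- br s x) a" using br_anti[of x s] by simp
    also have "\<dots> = - B (br s x) a" by (rule B_neg_l)
    also have "br s x = sc (\<delta> s) x" using assms(1,2) by (simp add: G_mem)
    finally show ?thesis by (simp add: B_scale_l)
  qed
  ultimately have e: "c * B x a = - (\<delta> s * B x a)" by simp
  have "(c + \<delta> s) * B x a = c * B x a + \<delta> s * B x a" by (simp add: distrib_right)
  also have "\<dots> = 0" using e by simp
  finally have "(c + \<delta> s) * B x a = 0" .
  moreover have "c + \<delta> s \<noteq> 0" using assms(4) eq_neg_iff_add_eq_0 by blast
  ultimately show ?thesis by simp
qed

lemma joint_step: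
  assumes x: "x \<in> G \<delta>" and s0: "s0 \<in> H" and F: "F \<subseteq> H"
    and y: "B x y \<noteq> 0" "\<forall>s\<in>F. br s y = sc (- \<delta> s) y"
  shows "\<exists>y'. B x y' \<noteq> 0 \<and> (\<forall>s\<in>insert s0 F. br s y' = sc (- \<delta> s) y')"
proof -
  have "y \<in> V.span {x. \<exists>c. br s0 x = sc c x}" using H_diag[OF s0] by simp
  then obtain t r where t: "finite t" "t \<subseteq> {x. \<exists>c. br s0 x = sc c x}" and yt: "y = (\<Sum>a\<in>t. sc (r a) a)"
    unfolding V.span_explicit by blast
  define ev where "ev a = (SOME c. br s0 a = sc c a)" for a
  have ev: "br s0 a = sc (ev a) a" if "a \<in> t" for a
    using t that unfolding ev_def by (auto intro: someI_ex)
  define w where "w \<mu> = (\<Sum>a\<in>{a\<in>t. ev a = \<mu>}. sc (r a) a)" for \<mu>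
  define M where "M = ev ` t"
  have fM: "finite M" using t by (simp add: M_def)
  have sumw: "sum w M = y" unfolding w_def M_def yt
    using sum.image_gen[OF t(1), of "\<lambda>a. sc (r a) a" ev] by simp
  have wE: "br s0 (w \<mu>) = sc \<mu> (w \<mu>)" for \<mu>
    unfolding w_def br_sum_r V.scale_sum_right
    by (intro sum.cong) (auto simp: br_scale_r ev mult.commute)
  define P where "P = w (- \<delta> s0)"
  have "B x y = (\<Sum>a\<in>t. r a * B x a)" unfolding yt B_sum_r by (simp add: B_scale_r)
  also have "\<dots> = (\<Sum>a\<in>t. if ev a = - \<delta> s0 then r a * B x a else 0)"
    by (intro sum.cong) (auto intro: eig_B[OF x s0 ev])
  also have "\<dots> = (\<Sum>a\<in>{a\<in>t. ev a = - \<delta> s0}. r a * B x a)"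
    using t(1) by (simp add: sum.inter_filter)
  also have "\<dots> = B x P" unfolding P_def w_def B_sum_r by (simp add: B_scale_r)
  finally have BP: "B x P \<noteq> 0" using y by simp
  have "br s P = sc (- \<delta> s) P" if s: "s \<in> F" for s
  proof -
    define U where "U v = br s v - sc (- \<delta> s) v" for v
    have "\<forall>\<mu>\<in>M. U (w \<mu>) = 0"
    proof (rule eig_indep[OF fM])
      show "\<forall>\<mu>\<in>M. br s0 (U (w \<mu>)) = sc \<mu> (U (w \<mu>))"
      proof
        fix \<mu>
        have c: "br s0 (br s v) = br s (br s0 v)" for v
          using jac[of s0 s v] H_ab[OF s0] s F by auto
        show "br s0 (U (w \<mu>)) = sc \<mu> (U (w \<mu>))"
        proof -
          have "br s0 (U (w \<mu>)) = br s (br s0 (w \<mu>)) - sc (- \<delta> s) (br s0 (w \<mu>))"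
            unfolding U_def br_diff_r c br_scale_r ..
          also have "\<dots> = br s (sc \<mu> (w \<mu>)) - sc (- \<delta> s) (sc \<mu> (w \<mu>))"
            unfolding wE ..
          also have "\<dots> = sc \<mu> (br s (w \<mu>)) - sc \<mu> (sc (- \<delta> s) (w \<mu>))"
            unfolding br_scale_r V.scale_left_commute[of "- \<delta> s"] ..
          also have "\<dots> = sc \<mu> (U (w \<mu>))" unfolding U_def V.scale_right_diff_distrib ..
          finally show ?thesis .
        qed
      qed
      have "sum (\<lambda>\<mu>. U (w \<mu>)) M = br s (sum w M) - sc (- \<delta> s) (sum w M)"
        unfolding U_def by (simp only: sum_subtractf br_sum_r V.scale_sum_right)
      also have "\<dots> = 0" using sumw y s by simp
      finally show "(\<Sum>\<mu>\<in>M. U (w \<mu>)) = 0" .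
    qed
    moreover have "- \<delta> s0 \<in> M"
    proof (rule ccontr)
      assume "- \<delta> s0 \<notin> M"
      hence "{a\<in>t. ev a = - \<delta> s0} = {}" unfolding M_def by (auto, metis imageI)
      hence "P = 0" unfolding P_def w_def by (simp only: sum.empty)
      thus False using BP by simp
    qed
    ultimately have "U P = 0" unfolding P_def by blast
    thus ?thesis unfolding U_def by (metis eq_iff_diff_eq_0)
  qed
  moreover have "br s0 P = sc (- \<delta> s0) P" unfolding P_def by (rule wE)
  ultimately show ?thesis using BP by auto
qed

lemma joint:
  assumes \<delta>: "\<delta> \<in> D" and x: "x \<in> G \<delta>" and g: "B x g \<noteq> 0"
  shows "\<exists>y\<in>G (\<lambda>h. - \<delta> h). B x y \<noteq> 0"
proof -
  obtain S where S: "finite S" "S \<subseteq> H" "V.span S = H" using H_span by blast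
  have "\<forall>F. F \<subseteq> S \<longrightarrow> (\<exists>y. B x y \<noteq> 0 \<and> (\<forall>s\<in>F. br s y = sc (- \<delta> s) y))"
  proof (intro allI impI)
    fix F assume "F \<subseteq> S"
    hence "finite F" "F \<subseteq> H" using S finite_subset by auto
    thus "\<exists>y. B x y \<noteq> 0 \<and> (\<forall>s\<in>F. br s y = sc (- \<delta> s) y)"
    proof (induction F rule: finite_induct)
      case empty thus ?case using g by auto
    next
      case (insert s0 F)
      then obtain y where "B x y \<noteq> 0" "\<forall>s\<in>F. br s y = sc (- \<delta> s) y" by auto
      thus ?case using joint_step[OF x, of s0 F y] insert.prems by auto
    qed
  qed
  then obtain y where y: "B x y \<noteq> 0" "\<forall>s\<in>S. br s y = sc (- \<delta> s) y" by blast
  let ?T = "{h. h \<in> H \<and> br h y = sc (- \<delta> h) y}"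
  have "V.subspace ?T" unfolding V.subspace_def
  proof (intro conjI ballI allI)
    show "0 \<in> ?T" using \<delta> by simp
    fix h k assume "h \<in> ?T" "k \<in> ?T"
    thus "h + k \<in> ?T" using \<delta> by (auto simp: H_add br_add_l dual_add_H V.scale_left_distrib)
  next
    fix c h assume "h \<in> ?T"
    thus "sc c h \<in> ?T" using \<delta> by (auto simp: H_scale br_scale_l dual_scale_H)
  qed
  hence "V.span S \<subseteq> ?T" using S y by (intro V.span_minimal) auto
  hence "y \<in> G (\<lambda>h. - \<delta> h)" using S unfolding G_mem by auto
  thus ?thesis using y by auto
qed

lemma H_nondeg: assumes "t \<in> H" "\<forall>h\<in>H. B t h = 0" shows "t = 0"
proof (rule ccontr)
  assume "t \<noteq> 0"
  then obtain g where "B t g \<noteq> 0" using B_nondeg by blast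
  moreover have "t \<in> G (\<lambda>_. 0)" using G0 assms by simp
  ultimately obtain y where "y \<in> G (\<lambda>h. - (\<lambda>_. 0) h)" "B t y \<noteq> 0"
    using joint[OF dual_zero_fun] by blast
  thus False using G0 assms by simp
qed

sublocale VF: vector_space fscale by (rule VF)

lemma D_sub: "VF.subspace D"
  unfolding VF.subspace_def
proof (intro conjI ballI allI)
  show "0 \<in> D" using dual_zero_fun by (simp add: zero_fun_def)
  fix f g assume "f \<in> D" "g \<in> D"
  thus "f + g \<in> D" using dual_add[of f g] by (simp add: plus_fun_def)
next
  fix c f assume "f \<in> D"
  thus "fscale c f \<in> D" using dual_lin[of f f c 0] by (simp add: fscale_def)
qed

lemma tvec_ex: assumes \<alpha>: "\<alpha> \<in> D" shows "\<exists>t\<in>H. \<forall>h\<in>H. B t h = \<alpha> h"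
proof -
  obtain S where S: "finite S" "S \<subseteq> H" "V.span S = H" using H_span by blast
  obtain S0 where S0: "S0 \<subseteq> S" "V.independent S0" "S \<subseteq> V.span S0"
    using V.maximal_independent_subset[of S] by blast
  have fS0: "finite S0" using S0(1) S(1) by (rule finite_subset)
  have S0H: "S0 \<subseteq> H" using S0(1) S(2) by (rule order_trans)
  have spS0: "V.span S0 = H"
  proof
    show "V.span S0 \<subseteq> H" using V.span_mono[OF S0(1)] S(3) by simp
    show "H \<subseteq> V.span S0" using V.span_minimal[OF S0(3) V.subspace_span] S(3) by simp
  qed
  define \<Phi> where "\<Phi> t = (\<lambda>x. if x \<in> H then B t x else 0)" for t
  have hom\<Phi>: "module_hom sc fscale \<Phi>"
    unfolding module_hom_iff using V.module_axioms VF.module_axioms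
    by (auto simp: \<Phi>_def fun_eq_iff B_add_l)
  have \<Phi>D: "\<Phi> t \<in> D" for t
    unfolding dual_space_def \<Phi>_def by (auto simp: H_add H_scale B_add_r)
  have inj\<Phi>: "inj_on \<Phi> H"
    unfolding module_hom.inj_on_iff_eq_0[OF hom\<Phi> H_sub]
  proof (intro ballI impI)
    fix t assume t: "t \<in> H" "\<Phi> t = 0"
    have "\<forall>h\<in>H. B t h = 0"
    proof
      fix h assume "h \<in> H"
      have "\<Phi> t h = 0" using t(2) by simp
      thus "B t h = 0" unfolding \<Phi>_def using \<open>h \<in> H\<close> by simp
    qed
    thus "t = 0" using H_nondeg t(1) by blast
  qed
  have "\<alpha> \<in> VF.span (\<Phi> ` S0)"
  proof (rule ccontr)
    assume na: "\<alpha> \<notin> VF.span (\<Phi> ` S0)"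
    have ind1: "VF.independent (\<Phi> ` S0)"
      using module_hom.independent_injective_image[OF hom\<Phi> S0(2)] inj\<Phi> spS0 by simp
    define I where "I = insert \<alpha> (\<Phi> ` S0)"
    have ind2: "VF.independent I" unfolding I_def using VF.independent_insertI[OF na ind1] .
    have ID: "I \<subseteq> D" unfolding I_def using \<alpha> \<Phi>D by auto
    define R where "R f = (\<lambda>x. if x \<in> S0 then f x else (0::complex))" for f :: "'g \<Rightarrow> complex"
    have homR: "module_hom fscale fscale R"
      unfolding module_hom_iff using VF.module_axioms
      by (auto simp: R_def fun_eq_iff)
    have injR: "inj_on R D"
      unfolding module_hom.inj_on_iff_eq_0[OF homR D_sub]
    proof (intro ballI impI)
      fix f assume f: "f \<in> D" "R f = 0"
      let ?T = "{x. x \<in> H \<and> f x = 0}"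
      have "V.subspace ?T" unfolding V.subspace_def
        using f(1) by (auto simp: H_add H_scale dual_add_H dual_scale_H)
      moreover have "S0 \<subseteq> ?T"
      proof
        fix s assume s: "s \<in> S0"
        have "R f s = 0" using f(2) by simp
        hence "f s = 0" unfolding R_def using s by simp
        thus "s \<in> ?T" using s S0H by blast
      qed
      ultimately have "V.span S0 \<subseteq> ?T" using V.span_minimal by blast
      hence fH: "\<forall>x\<in>H. f x = 0" using spS0 by blast
      show "f = 0"
      proof
        fix x show "f x = 0 x" using fH dual_out[OF f(1), of x] by (cases "x \<in> H") auto
      qed
    qed
    have "VF.span I \<subseteq> D" using ID D_sub VF.span_minimal by blast
    hence injRI: "inj_on R (VF.span I)" using injR inj_on_subset by blast
    have ind3: "VF.independent (R ` I)"
      using module_hom.independent_injective_image[OF homR ind2 injRI] .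
    define ind where "ind s = (\<lambda>x. if x = s then (1::complex) else 0)" for s :: 'g
    have Rsum: "R f = (\<Sum>s\<in>S0. fscale (f s) (ind s))" for f
    proof
      fix x
      have "(\<Sum>s\<in>S0. fscale (f s) (ind s)) x = (\<Sum>s\<in>S0. f s * (if x = s then 1 else 0))"
        unfolding sum_fun_apply ind_def by simp
      also have "\<dots> = (\<Sum>s\<in>S0. if x = s then f x else 0)" by (intro sum.cong) auto
      also have "\<dots> = R f x" unfolding R_def using fS0 by (simp add: sum.delta)
      finally show "R f x = (\<Sum>s\<in>S0. fscale (f s) (ind s)) x" by simp
    qed
    have "R ` I \<subseteq> VF.span (ind ` S0)"
    proof
      fix g assume "g \<in> R ` I"
      then obtain f where "g = R f" by blast
      have "R f \<in> VF.span (ind ` S0)" unfolding Rsum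
        by (rule VF.span_sum, rule VF.span_scale, rule VF.span_base) blast
      thus "g \<in> VF.span (ind ` S0)" using \<open>g = R f\<close> by simp
    qed
    from VF.independent_span_bound[OF finite_imageI[OF fS0] ind3 this]
    have "card (R ` I) \<le> card (ind ` S0)" by simp
    also have "\<dots> \<le> card S0" using card_image_le[OF fS0] .
    finally have c1: "card (R ` I) \<le> card S0" .
    have "card (R ` I) = card I"
      using card_image[OF inj_on_subset[OF injRI VF.span_superset]] .
    also have "\<dots> = Suc (card (\<Phi> ` S0))"
      unfolding I_def using na VF.span_superset[of "\<Phi> ` S0"]
      by (intro card_insert_disjoint finite_imageI fS0) blast
    also have "card (\<Phi> ` S0) = card S0"
      using card_image[OF inj_on_subset[OF inj\<Phi> S0H]] .
    finally show False using c1 by simp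
  qed
  also have "VF.span (\<Phi> ` S0) = \<Phi> ` H"
    using module_hom.span_image[OF hom\<Phi>] spS0 by simp
  finally obtain t where "t \<in> H" "\<alpha> = \<Phi> t" by blast
  thus ?thesis unfolding \<Phi>_def by auto
qed

lemma tvec_uniq: assumes "t \<in> H" "t' \<in> H" "\<forall>h\<in>H. B t h = B t' h" shows "t = t'"
proof -
  have "t - t' \<in> H" using assms H_sub V.subspace_diff by blast
  moreover have "\<forall>h\<in>H. B (t - t') h = 0"
    using assms module_hom.diff[OF B_lin_l] by simp
  ultimately have "t - t' = 0" using H_nondeg by blast
  thus ?thesis by simp
qed

lemma tvec_prop: assumes "\<alpha> \<in> D"
  shows "tvec B H \<alpha> \<in> H" "\<And>h. h \<in> H \<Longrightarrow> B (tvec B H \<alpha>) h = \<alpha> h"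
proof -
  have ex: "\<exists>!t. t \<in> H \<and> (\<forall>h\<in>H. B t h = \<alpha> h)"
    using tvec_ex[OF assms] tvec_uniq by metis
  show "tvec B H \<alpha> \<in> H" unfolding tvec_def using theI'[OF ex] by blast
  fix h assume "h \<in> H"
  thus "B (tvec B H \<alpha>) h = \<alpha> h" unfolding tvec_def using theI'[OF ex] by blast
qed

lemma tvec_eqI: assumes "\<alpha> \<in> D" "t \<in> H" "\<forall>h\<in>H. B t h = \<alpha> h" shows "tvec B H \<alpha> = t"
  using tvec_uniq[OF tvec_prop(1)[OF assms(1)] assms(2)] tvec_prop(2)[OF assms(1)] assms(3) by simp

lemma rf_eval: assumes "\<alpha> \<in> D" "\<beta> \<in> D" shows "root_form B H \<alpha> \<beta> = \<alpha> (tvec B H \<beta>)"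
  unfolding root_form_def using tvec_prop[OF assms(1)] tvec_prop(1)[OF assms(2)] by simp

lemma rf_sym: assumes "\<alpha> \<in> D" "\<beta> \<in> D" shows "root_form B H \<alpha> \<beta> = root_form B H \<beta> \<alpha>"
  unfolding root_form_def using B_sym by simp

lemma tvec_lin: assumes "\<alpha> \<in> D" "\<beta> \<in> D"
  shows "tvec B H (\<lambda>h. a * \<alpha> h + b * \<beta> h) = sc a (tvec B H \<alpha>) + sc b (tvec B H \<beta>)"
  using tvec_prop[OF assms(1)] tvec_prop[OF assms(2)]
  by (intro tvec_eqI dual_lin assms) (auto simp: H_add H_scale B_add_l B_scale_l)

lemma tvec_neg: assumes "\<alpha> \<in> D" shows "tvec B H (\<lambda>h. - \<alpha> h) = - tvec B H \<alpha>"
  using tvec_lin[OF assms assms, of "-1" 0] by simp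

lemma dual_scale_t: "\<alpha> \<in> D \<Longrightarrow> \<beta> \<in> D \<Longrightarrow> \<alpha> (sc c (tvec B H \<beta>)) = c * \<alpha> (tvec B H \<beta>)"
  using dual_scale_H tvec_prop(1) by blast

lemma roots_D: "\<alpha> \<in> roots sc br H \<Longrightarrow> \<alpha> \<in> D" unfolding roots_def by auto
lemma roots_nz: "\<alpha> \<in> roots sc br H \<Longrightarrow> \<exists>x\<in>G \<alpha>. x \<noteq> 0"
  unfolding roots_def using G_zero by blast
lemma rootsI: "\<alpha> \<in> D \<Longrightarrow> x \<in> G \<alpha> \<Longrightarrow> x \<noteq> 0 \<Longrightarrow> \<alpha> \<in> roots sc br H"
  unfolding roots_def by auto

lemma br_pair: assumes "\<delta> \<in> D" "x \<in> G \<delta>" "y \<in> G (\<lambda>h. - \<delta> h)"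
  shows "br x y = sc (B x y) (tvec B H \<delta>)"
proof (rule tvec_uniq)
  have "br x y \<in> G (\<lambda>h. \<delta> h + - \<delta> h)" using G_br assms by blast
  thus "br x y \<in> H" using G0 by simp
  show "sc (B x y) (tvec B H \<delta>) \<in> H" using tvec_prop[OF assms(1)] H_scale by blast
  show "\<forall>h\<in>H. B (br x y) h = B (sc (B x y) (tvec B H \<delta>)) h"
  proof
    fix h assume h: "h \<in> H"
    have "B (br x y) h = B x (br y h)" by (rule B_inv)
    also have "\<dots> = - B x (br h y)" by (metis br_anti B_neg_r)
    also have "\<dots> = B x y * \<delta> h" using assms h by (simp add: G_mem B_scale_r)
    also have "\<dots> = B (sc (B x y) (tvec B H \<delta>)) h" using tvec_prop[OF assms(1)] h by (simp add: B_scale_l)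
    finally show "B (br x y) h = B (sc (B x y) (tvec B H \<delta>)) h" .
  qed
qed

lemma neg_root: assumes "\<alpha> \<in> roots sc br H" shows "(\<lambda>h. - \<alpha> h) \<in> roots sc br H"
proof -
  obtain x where x: "x \<in> G \<alpha>" "x \<noteq> 0" using roots_nz[OF assms] by blast
  then obtain g where "B x g \<noteq> 0" using B_nondeg by blast
  then obtain y where "y \<in> G (\<lambda>h. - \<alpha> h)" "B x y \<noteq> 0" using joint roots_D[OF assms] x by blast
  thus ?thesis using rootsI dual_neg roots_D[OF assms] by fastforce
qed

lemma rf_neg: assumes "\<alpha> \<in> D" shows "root_form B H (\<lambda>h. - \<alpha> h) (\<lambda>h. - \<alpha> h) = root_form B H \<alpha> \<alpha>"
  unfolding root_form_def tvec_neg[OF assms] by (simp add: B_neg_l B_neg_r)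

lemma wt_f: assumes "br h f = sc (-2) f" "br h v = sc l v"
  shows "br h ((br f ^^ k) v) = sc (l - 2 * of_nat k) ((br f ^^ k) v)"
proof (induction k)
  case 0 thus ?case using assms by simp
next
  case (Suc k)
  let ?u = "(br f ^^ k) v"
  have "br h (br f ?u) = br f (br h ?u) + br (br h f) ?u" by (rule jac)
  also have "\<dots> = sc (l - 2 * of_nat k) (br f ?u) + sc (-2) (br f ?u)"
    using Suc assms by (simp add: br_scale_r br_scale_l)
  also have "\<dots> = sc (l - 2 * of_nat k + (-2)) (br f ?u)"
    by (rule V.scale_left_distrib[symmetric])
  also have "l - 2 * of_nat k + (-2) = l - 2 * of_nat (Suc k)" by (simp add: algebra_simps)
  finally show ?case by simp
qed

lemma wt_e: assumes "br h e = sc 2 e" "br h v = sc l v"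
  shows "br h ((br e ^^ k) v) = sc (l + 2 * of_nat k) ((br e ^^ k) v)"
proof (induction k)
  case 0 thus ?case using assms by simp
next
  case (Suc k)
  let ?u = "(br e ^^ k) v"
  have "br h (br e ?u) = br e (br h ?u) + br (br h e) ?u" by (rule jac)
  also have "\<dots> = sc (l + 2 * of_nat k) (br e ?u) + sc 2 (br e ?u)"
    using Suc assms by (simp add: br_scale_r br_scale_l)
  also have "\<dots> = sc (l + 2 * of_nat k + 2) (br e ?u)"
    by (rule V.scale_left_distrib[symmetric])
  also have "l + 2 * of_nat k + 2 = l + 2 * of_nat (Suc k)" by (simp add: algebra_simps)
  finally show ?case by simp
qed

lemma nil_last: fixes T :: "'a \<Rightarrow> 'a::zero" assumes "v \<noteq> 0" "(T ^^ n) v = 0"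
  shows "\<exists>N. (T ^^ N) v \<noteq> 0 \<and> (T ^^ Suc N) v = 0"
proof -
  define n0 where "n0 = (LEAST n. (T ^^ n) v = 0)"
  have z: "(T ^^ n0) v = 0" unfolding n0_def using LeastI[of "\<lambda>n. (T ^^ n) v = 0"] assms by blast
  have "n0 \<noteq> 0"
  proof
    assume "n0 = 0"
    hence "(T ^^ 0) v = 0" using z by simp
    thus False using assms by simp
  qed
  then obtain N where N: "n0 = Suc N" using not0_implies_Suc by blast
  have "(T ^^ N) v \<noteq> 0" using not_less_Least[of N "\<lambda>n. (T ^^ n) v = 0"] N unfolding n0_def by simp
  thus ?thesis using z N by blast
qed

lemma sl2_weight:
  assumes ef: "br e f = h" and he: "br h e = sc 2 e" and hf: "br h f = sc (-2) f"
    and hv: "br h v = sc l v" and v: "v \<noteq> 0" and fev: "br f (br e v) = 0"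
    and nil: "\<forall>y. \<exists>n. (br f ^^ n) y = 0"
  shows "\<exists>N::nat. l = of_nat N"
proof -
  have key: "br e ((br f ^^ Suc k) v) = sc (of_nat (Suc k) * (l - of_nat k)) ((br f ^^ k) v)" for k
  proof (induction k)
    case 0
    have "br e (br f v) = br f (br e v) + br (br e f) v" by (rule jac)
    thus ?case using fev ef hv by simp
  next
    case (Suc k)
    let ?u = "(br f ^^ Suc k) v"
    have "br e (br f ?u) = br f (br e ?u) + br (br e f) ?u" by (rule jac)
    also have "\<dots> = sc (of_nat (Suc k) * (l - of_nat k)) (br f ((br f ^^ k) v))
                     + sc (l - 2 * of_nat (Suc k)) ?u"
      using Suc ef wt_f[OF hf hv, of "Suc k"] by (simp add: br_scale_r)
    also have "\<dots> = sc (of_nat (Suc k) * (l - of_nat k) + (l - 2 * of_nat (Suc k))) ?u"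
      by (simp add: V.scale_left_distrib)
    also have "of_nat (Suc k) * (l - of_nat k) + (l - 2 * of_nat (Suc k)) = of_nat (Suc (Suc k)) * (l - of_nat (Suc k))"
      by (simp add: algebra_simps)
    finally show ?case by simp
  qed
  obtain n where "(br f ^^ n) v = 0" using nil by blast
  then obtain N where N: "(br f ^^ N) v \<noteq> 0" "(br f ^^ Suc N) v = 0" using nil_last v by blast
  have "0 = br e ((br f ^^ Suc N) v)" using N by simp
  also have "\<dots> = sc (of_nat (Suc N) * (l - of_nat N)) ((br f ^^ N) v)" by (rule key)
  finally have "of_nat (Suc N) * (l - of_nat N) = (0::complex)" using N by simp
  hence "l = of_nat N" by (simp del: of_nat_Suc)
  thus ?thesis by blast
qed

lemma sl2_int:
  assumes ef: "br e f = h" and he: "br h e = sc 2 e" and hf: "br h f = sc (-2) f"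
    and hv: "br h v = sc l v" and v: "v \<noteq> 0"
    and nilf: "\<forall>y. \<exists>n. (br f ^^ n) y = 0" and nile: "\<forall>y. \<exists>n. (br e ^^ n) y = 0"
  shows "\<exists>z::int. l = of_int z"
proof -
  obtain n where "(br e ^^ n) v = 0" using nile by blast
  then obtain m where m: "(br e ^^ m) v \<noteq> 0" "(br e ^^ Suc m) v = 0" using nil_last v by blast
  have "\<exists>N::nat. l + 2 * of_nat m = of_nat N"
    using sl2_weight[OF ef he hf wt_e[OF he hv, of m] m(1) _ nilf] m(2) by simp
  then obtain N where "l + 2 * of_nat m = of_nat N" by blast
  hence "l = of_int (int N - 2 * int m)" by (simp add: algebra_simps)
  thus ?thesis by blast
qed

lemma tvec_add: assumes "\<alpha> \<in> D" "\<beta> \<in> D"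
  shows "tvec B H (\<lambda>h. \<alpha> h + \<beta> h) = tvec B H \<alpha> + tvec B H \<beta>"
  using tvec_lin[OF assms, of 1 1] by simp

lemma triple:
  assumes G3: "GR3 sc br B H" and \<beta>: "\<beta> \<in> roots sc br H" and q: "root_form B H \<beta> \<beta> \<noteq> 0"
  obtains e f where "e \<in> G \<beta>" "f \<in> G (\<lambda>h. - \<beta> h)"
    "br e f = sc (2 / root_form B H \<beta> \<beta>) (tvec B H \<beta>)"
    "br (sc (2 / root_form B H \<beta> \<beta>) (tvec B H \<beta>)) e = sc 2 e"
    "br (sc (2 / root_form B H \<beta> \<beta>) (tvec B H \<beta>)) f = sc (-2) f"
    "\<forall>y. \<exists>n. (br e ^^ n) y = 0" "\<forall>y. \<exists>n. (br f ^^ n) y = 0"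
proof -
  let ?q = "root_form B H \<beta> \<beta>"
  let ?h = "sc (2 / ?q) (tvec B H \<beta>)"
  have \<beta>D: "\<beta> \<in> D" using roots_D[OF \<beta>] .
  obtain e where e: "e \<in> G \<beta>" "e \<noteq> 0" using roots_nz[OF \<beta>] by blast
  then obtain g where "B e g \<noteq> 0" using B_nondeg by blast
  then obtain f0 where f0: "f0 \<in> G (\<lambda>h. - \<beta> h)" "B e f0 \<noteq> 0" using joint[OF \<beta>D e(1)] by blast
  define f where "f = sc (2 / ?q / B e f0) f0"
  have f: "f \<in> G (\<lambda>h. - \<beta> h)" unfolding f_def using f0 G_sub V.subspace_scale by blast
  have Bef: "B e f = 2 / ?q" unfolding f_def using f0 by (simp add: B_scale_r)
  have ef: "br e f = ?h" using br_pair[OF \<beta>D e(1) f] Bef by simp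
  have hH: "?h \<in> H" using tvec_prop(1)[OF \<beta>D] H_scale by blast
  have bh: "\<beta> ?h = 2"
    using dual_scale_t[OF \<beta>D \<beta>D] rf_eval[OF \<beta>D \<beta>D] q by simp
  have "br ?h e = sc (\<beta> ?h) e" using e(1) hH unfolding G_mem by blast
  hence he: "br ?h e = sc 2 e" unfolding bh .
  have "br ?h f = sc (- \<beta> ?h) f" using f hH unfolding G_mem by blast
  hence hf: "br ?h f = sc (-2) f" unfolding bh .
  have "\<beta> \<in> nonisotropic_roots sc br B H" using \<beta> q unfolding nonisotropic_roots_def by simp
  hence nile: "\<forall>y. \<exists>n. (br e ^^ n) y = 0" using G3 e unfolding GR3_def by blast
  have "(\<lambda>h. - \<beta> h) \<in> nonisotropic_roots sc br B H"
    using neg_root[OF \<beta>] rf_neg[OF \<beta>D] q unfolding nonisotropic_roots_def by simp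
  hence nilf: "\<forall>y. \<exists>n. (br f ^^ n) y = 0" using G3 f unfolding GR3_def by blast
  show ?thesis using that[OF e(1) f ef he hf nile nilf] .
qed

lemma integral:
  assumes G3: "GR3 sc br B H" and \<beta>: "\<beta> \<in> roots sc br H" and q: "root_form B H \<beta> \<beta> \<noteq> 0"
    and \<gamma>: "\<gamma> \<in> D" and v: "v \<in> G \<gamma>" "v \<noteq> 0"
  shows "\<exists>z::int. 2 / root_form B H \<beta> \<beta> * \<gamma> (tvec B H \<beta>) = of_int z"
proof -
  let ?q = "root_form B H \<beta> \<beta>"
  let ?h = "sc (2 / ?q) (tvec B H \<beta>)"
  have \<beta>D: "\<beta> \<in> D" using roots_D[OF \<beta>] .
  obtain e f where "e \<in> G \<beta>" "f \<in> G (\<lambda>h. - \<beta> h)" and ef: "br e f = ?h" "br ?h e = sc 2 e" "br ?h f = sc (-2) f"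
    "\<forall>y. \<exists>n. (br e ^^ n) y = 0" "\<forall>y. \<exists>n. (br f ^^ n) y = 0"
    by (rule triple[OF G3 \<beta> q])
  have hH: "?h \<in> H" using tvec_prop(1)[OF \<beta>D] H_scale by blast
  have "br ?h v = sc (\<gamma> ?h) v" using v(1) hH unfolding G_mem by blast
  hence hv: "br ?h v = sc (2 / ?q * \<gamma> (tvec B H \<beta>)) v" unfolding dual_scale_t[OF \<gamma> \<beta>D] .
  show ?thesis using sl2_int[OF ef(1-3) hv v(2) ef(5) ef(4)] by blast
qed

lemma fin_subsingleton: assumes "\<forall>a\<in>S. \<forall>b\<in>S. a = b" shows "finite S"
proof (cases "S = {}")
  case False
  then obtain a where "a \<in> S" by blast
  hence "S \<subseteq> {a}" using assms by blast
  thus ?thesis by (rule finite_subset) simp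
qed simp

lemma part1:
  assumes G3: "GR3 sc br B H" and \<alpha>: "\<alpha> \<in> roots sc br H" and \<delta>: "\<delta> \<in> isotropic_roots sc br B H"
  shows "root_form B H \<alpha> \<delta> = 0"
proof (rule ccontr)
  have \<delta>r: "\<delta> \<in> roots sc br H" and \<delta>0: "root_form B H \<delta> \<delta> = 0"
    using \<delta> unfolding isotropic_roots_def by auto
  have \<alpha>D: "\<alpha> \<in> D" using roots_D[OF \<alpha>] .
  have \<delta>D: "\<delta> \<in> D" using roots_D[OF \<delta>r] .
  define t\<alpha> where "t\<alpha> = tvec B H \<alpha>"
  define t\<delta> where "t\<delta> = tvec B H \<delta>"
  define c where "c = \<alpha> t\<delta>"
  define A where "A = \<alpha> t\<alpha>"
  have tH: "t\<alpha> \<in> H" "t\<delta> \<in> H" using tvec_prop \<alpha>D \<delta>D unfolding t\<alpha>_def t\<delta>_def by auto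
  have dtd: "\<delta> t\<delta> = 0" using \<delta>0 rf_eval[OF \<delta>D \<delta>D] unfolding t\<delta>_def by simp
  have dta: "\<delta> t\<alpha> = c" using rf_eval[OF \<alpha>D \<delta>D] rf_eval[OF \<delta>D \<alpha>D] rf_sym[OF \<alpha>D \<delta>D]
    unfolding c_def t\<alpha>_def t\<delta>_def by simp
  assume "root_form B H \<alpha> \<delta> \<noteq> 0"
  hence c0: "c \<noteq> 0" using rf_eval[OF \<alpha>D \<delta>D] unfolding c_def t\<delta>_def by simp
  obtain x where x: "x \<in> G \<delta>" "x \<noteq> 0" using roots_nz[OF \<delta>r] by blast
  then obtain g where "B x g \<noteq> 0" using B_nondeg by blast
  then obtain y0 where y0: "y0 \<in> G (\<lambda>h. - \<delta> h)" "B x y0 \<noteq> 0" using joint[OF \<delta>D x(1)] by blast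
  define y where "y = sc (1 / B x y0) y0"
  have y: "y \<in> G (\<lambda>h. - \<delta> h)" unfolding y_def using y0 G_sub V.subspace_scale by blast
  have Bxy: "B x y = 1" unfolding y_def using y0 by (simp add: B_scale_r)
  have xy: "br x y = t\<delta>" using br_pair[OF \<delta>D x(1) y] Bxy unfolding t\<delta>_def by simp
  obtain z where z: "z \<in> G \<alpha>" "z \<noteq> 0" using roots_nz[OF \<alpha>] by blast
  define \<beta> where "\<beta> k = (\<lambda>h. \<alpha> h + of_int k * \<delta> h)" for k :: int
  have \<beta>D: "\<beta> k \<in> D" for k unfolding \<beta>_def using dual_lin[OF \<alpha>D \<delta>D, of 1 "of_int k"] by simp
  have \<beta>0: "\<beta> 0 = \<alpha>" unfolding \<beta>_def by simp
  have Gx: "br x w \<in> G (\<beta> (k + 1))" if "w \<in> G (\<beta> k)" for w k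
  proof -
    have "br x w \<in> G (\<lambda>h. \<delta> h + \<beta> k h)" using G_br[OF x(1) that] .
    moreover have "(\<lambda>h. \<delta> h + \<beta> k h) = \<beta> (k + 1)" unfolding \<beta>_def by (auto simp: fun_eq_iff algebra_simps)
    ultimately show ?thesis by simp
  qed
  have Gy: "br y w \<in> G (\<beta> (k - 1))" if "w \<in> G (\<beta> k)" for w k
  proof -
    have "br y w \<in> G (\<lambda>h. - \<delta> h + \<beta> k h)" using G_br[OF y that] .
    moreover have "(\<lambda>h. - \<delta> h + \<beta> k h) = \<beta> (k - 1)" unfolding \<beta>_def by (auto simp: fun_eq_iff algebra_simps)
    ultimately show ?thesis by simp
  qed
  have Gt: "br t\<delta> w = sc c w" if "w \<in> G (\<beta> k)" for w k
  proof -
    have "br t\<delta> w = sc (\<beta> k t\<delta>) w" using that tH(2) unfolding G_mem by blast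
    moreover have "\<beta> k t\<delta> = c" unfolding \<beta>_def c_def using dtd by simp
    ultimately show ?thesis by simp
  qed
  have heis: "br x (br y w) = br y (br x w) + sc c w" if "w \<in> G (\<beta> k)" for w k
    using jac[of x y w] xy Gt[OF that] by simp
  define K where "K = {k. \<beta> k \<in> roots sc br H}"
  have inK: "k \<in> K" if "w \<in> G (\<beta> k)" "w \<noteq> 0" for w k
    unfolding K_def using rootsI[OF \<beta>D that] by simp
  have infK: "infinite K"
  proof (cases "\<forall>n. (br x ^^ n) z \<noteq> 0")
    case True
    have mem: "(br x ^^ n) z \<in> G (\<beta> (int n))" for n
      by (induction n) (use z \<beta>0 in \<open>auto dest: Gx simp: add.commute\<close>)
    have "range int \<subseteq> K" using inK[OF mem True[rule_format]] by auto
    moreover have "inj int" by (simp add: inj_on_def)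
    hence "infinite (range int)" using finite_imageD infinite_UNIV_nat by blast
    ultimately show ?thesis using finite_subset by blast
  next
    case False
    then obtain n where "(br x ^^ n) z = 0" by blast
    then obtain N where N: "(br x ^^ N) z \<noteq> 0" "(br x ^^ Suc N) z = 0" using nil_last z by blast
    define w where "w = (br x ^^ N) z"
    have wG: "w \<in> G (\<beta> (int N))" unfolding w_def
      by (induction N) (use z \<beta>0 in \<open>auto dest: Gx simp: add.commute\<close>)
    have xw: "br x w = 0" using N unfolding w_def by simp
    have memy: "(br y ^^ m) w \<in> G (\<beta> (int N - int m))" for m
    proof (induction m)
      case 0 thus ?case using wG by simp
    next
      case (Suc m) thus ?case using Gy[OF Suc] by (simp add: algebra_simps)
    qed
    have key: "br x ((br y ^^ Suc m) w) = sc (of_nat (Suc m) * c) ((br y ^^ m) w)" for m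
    proof (induction m)
      case 0 thus ?case using heis[OF wG] xw by simp
    next
      case (Suc m)
      have "br x ((br y ^^ Suc (Suc m)) w) = br y (br x ((br y ^^ Suc m) w)) + sc c ((br y ^^ Suc m) w)"
        using heis[OF memy[of "Suc m"]] by simp
      also have "\<dots> = sc (of_nat (Suc m) * c + c) ((br y ^^ Suc m) w)"
        using Suc by (simp add: br_scale_r V.scale_left_distrib)
      finally show ?case by (simp add: algebra_simps)
    qed
    have nz: "(br y ^^ m) w \<noteq> 0" for m
    proof (induction m)
      case 0 thus ?case using N unfolding w_def by simp
    next
      case (Suc m)
      show ?case
      proof
        assume "(br y ^^ Suc m) w = 0"
        hence "sc (of_nat (Suc m) * c) ((br y ^^ m) w) = 0" using key[of m] by simp
        thus False using Suc c0 by (simp del: of_nat_Suc)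
      qed
    qed
    have "(\<lambda>m. int N - int m) ` UNIV \<subseteq> K" using inK[OF memy nz] by auto
    moreover have "inj (\<lambda>m. int N - int m)" by (auto simp: inj_def)
    hence "infinite ((\<lambda>m. int N - int m) ` UNIV)" using finite_imageD infinite_UNIV_nat by blast
    ultimately show ?thesis using finite_subset by blast
  qed
  have tb: "tvec B H (\<beta> k) = t\<alpha> + sc (of_int k) t\<delta>" for k
    using tvec_lin[OF \<alpha>D \<delta>D, of 1 "of_int k"] unfolding \<beta>_def t\<alpha>_def t\<delta>_def by simp
  have sct: "sc (of_int k) t\<delta> \<in> H" for k using tH H_scale by blast
  have db: "\<delta> (tvec B H (\<beta> k)) = c" for k
    using tb dual_add_H[OF \<delta>D tH(1) sct] dual_scale_H[OF \<delta>D tH(2)] dta dtd by simp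
  have qb: "root_form B H (\<beta> k) (\<beta> k) = A + 2 * of_int k * c" for k
  proof -
    have "root_form B H (\<beta> k) (\<beta> k) = \<beta> k (tvec B H (\<beta> k))" using rf_eval \<beta>D by blast
    also have "\<dots> = \<alpha> (tvec B H (\<beta> k)) + of_int k * c" using db unfolding \<beta>_def by simp
    also have "\<alpha> (tvec B H (\<beta> k)) = A + of_int k * c"
      using tb dual_add_H[OF \<alpha>D tH(1) sct] dual_scale_H[OF \<alpha>D tH(2)] unfolding A_def c_def by simp
    finally show ?thesis by (simp add: algebra_simps)
  qed
  have bound: "cmod (A + 2 * of_int k * c) \<le> 2 * cmod c" if "k \<in> K" "A + 2 * of_int k * c \<noteq> 0" for k
  proof -
    have kr: "\<beta> k \<in> roots sc br H" using that(1) unfolding K_def by simp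
    have qk: "root_form B H (\<beta> k) (\<beta> k) \<noteq> 0" using qb that(2) by simp
    have "\<exists>zz::int. 2 / root_form B H (\<beta> k) (\<beta> k) * \<delta> (tvec B H (\<beta> k)) = of_int zz"
      using integral[OF G3 kr qk \<delta>D x] .
    then obtain zz :: int where zz: "2 / (A + 2 * of_int k * c) * c = of_int zz" unfolding qb db by blast
    have "zz \<noteq> 0" using zz c0 that(2) by auto
    hence "1 \<le> cmod (of_int zz :: complex)" by simp
    also have "\<dots> = 2 * cmod c / cmod (A + 2 * of_int k * c)" unfolding zz[symmetric]
      by (simp add: norm_divide norm_mult)
    finally show ?thesis using that(2) by (simp add: field_simps)
  qed
  have f1: "finite {k::int. A + 2 * of_int k * c = 0}"
  proof (rule fin_subsingleton, intro ballI)
    fix a b assume "a \<in> {k::int. A + 2 * of_int k * c = 0}" "b \<in> {k::int. A + 2 * of_int k * c = 0}"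
    hence "A + 2 * of_int a * c = A + 2 * of_int b * c" by simp
    hence "of_int a * (2 * c) = (of_int b * (2 * c) :: complex)" by (simp add: algebra_simps)
    hence "(of_int a :: complex) = of_int b" using c0 by simp
    thus "a = b" by simp
  qed
  define M where "M = (2 * cmod c + cmod A) / (2 * cmod c)"
  have f2: "finite {k. k \<in> K \<and> A + 2 * of_int k * c \<noteq> 0}"
  proof (rule finite_subset)
    show "{k. k \<in> K \<and> A + 2 * of_int k * c \<noteq> 0} \<subseteq> {- ceiling M..ceiling M}"
    proof
      fix k assume "k \<in> {k. k \<in> K \<and> A + 2 * of_int k * c \<noteq> 0}"
      hence b: "cmod (A + 2 * of_int k * c) \<le> 2 * cmod c" using bound by blast
      have "cmod (2 * of_int k * c) \<le> cmod (A + 2 * of_int k * c) + cmod A"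
        using norm_triangle_ineq4[of "A + 2 * of_int k * c" A] by simp
      hence "2 * \<bar>of_int k\<bar> * cmod c \<le> 2 * cmod c + cmod A" using b by (simp add: norm_mult)
      hence "\<bar>of_int k\<bar> \<le> M" unfolding M_def using c0 by (simp add: field_simps)
      hence "\<bar>k\<bar> \<le> ceiling M" by linarith
      thus "k \<in> {- ceiling M..ceiling M}" by auto
    qed
  qed simp
  have "K \<subseteq> {k::int. A + 2 * of_int k * c = 0} \<union> {k. k \<in> K \<and> A + 2 * of_int k * c \<noteq> 0}" by auto
  hence "finite K" using f1 f2 finite_subset by blast
  thus False using infK by simp
qed


lemma core_gen: assumes "\<alpha> \<in> nonisotropic_roots sc br B H" "y \<in> G \<alpha>"
  shows "y \<in> core sc br B H"
  unfolding core_def generated_subalgebra_def using assms by blast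

lemma part2_fwd: assumes iso: "isolated_root sc br B H \<delta>"
  shows "G \<delta> \<subseteq> centralizer br (core sc br B H)"
proof
  fix x assume x: "x \<in> G \<delta>"
  have \<delta>D: "\<delta> \<in> D" using iso unfolding isolated_root_def isotropic_roots_def roots_def by auto
  let ?K = "{y. br x y = 0}"
  have "lie_subalgebra sc br ?K" unfolding lie_subalgebra_def
  proof
    show "V.subspace ?K" using module_hom.subspace_kernel[OF br_lin_r] .
    show "\<forall>y\<in>?K. \<forall>z\<in>?K. br y z \<in> ?K" using jac[of x] by simp
  qed
  moreover have "(\<Union>\<alpha>\<in>nonisotropic_roots sc br B H. G \<alpha>) \<subseteq> ?K"
  proof
    fix y assume "y \<in> (\<Union>\<alpha>\<in>nonisotropic_roots sc br B H. G \<alpha>)"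
    then obtain \<alpha> where \<alpha>: "\<alpha> \<in> nonisotropic_roots sc br B H" "y \<in> G \<alpha>" by blast
    have \<alpha>D: "\<alpha> \<in> D" using \<alpha> unfolding nonisotropic_roots_def roots_def by auto
    have nr: "(\<lambda>h. \<delta> h + \<alpha> h) \<notin> roots sc br H" using iso \<alpha> unfolding isolated_root_def by blast
    have "br x y \<in> G (\<lambda>h. \<delta> h + \<alpha> h)" using G_br[OF x \<alpha>(2)] .
    hence "br x y = 0" using rootsI[OF dual_add[OF \<delta>D \<alpha>D]] nr by blast
    thus "y \<in> ?K" by simp
  qed
  ultimately have "core sc br B H \<subseteq> ?K"
    unfolding core_def generated_subalgebra_def by blast
  thus "x \<in> centralizer br (core sc br B H)" unfolding centralizer_def by blast
qed

lemma part2_bwd: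
  assumes G3: "GR3 sc br B H" and \<delta>: "\<delta> \<in> isotropic_roots sc br B H"
    and cen: "G \<delta> \<subseteq> centralizer br (core sc br B H)"
  shows "isolated_root sc br B H \<delta>"
  unfolding isolated_root_def
proof (intro conjI ballI)
  show "\<delta> \<in> isotropic_roots sc br B H" by fact
  fix \<alpha> assume \<alpha>n: "\<alpha> \<in> nonisotropic_roots sc br B H"
  have \<alpha>r: "\<alpha> \<in> roots sc br H" and A: "root_form B H \<alpha> \<alpha> \<noteq> 0"
    using \<alpha>n unfolding nonisotropic_roots_def by auto
  have \<delta>r: "\<delta> \<in> roots sc br H" and \<delta>0: "root_form B H \<delta> \<delta> = 0"
    using \<delta> unfolding isotropic_roots_def by auto
  have \<alpha>D: "\<alpha> \<in> D" using roots_D[OF \<alpha>r] .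
  have \<delta>D: "\<delta> \<in> D" using roots_D[OF \<delta>r] .
  show "(\<lambda>x. \<delta> x + \<alpha> x) \<notin> roots sc br H"
  proof
    define \<beta> where "\<beta> = (\<lambda>x. \<delta> x + \<alpha> x)"
    assume "(\<lambda>x. \<delta> x + \<alpha> x) \<in> roots sc br H"
    hence \<beta>r: "\<beta> \<in> roots sc br H" unfolding \<beta>_def .
    have \<beta>D: "\<beta> \<in> D" using roots_D[OF \<beta>r] .
    define t\<alpha> where "t\<alpha> = tvec B H \<alpha>"
    define t\<delta> where "t\<delta> = tvec B H \<delta>"
    have tH: "t\<alpha> \<in> H" "t\<delta> \<in> H" using tvec_prop \<alpha>D \<delta>D unfolding t\<alpha>_def t\<delta>_def by auto
    have p1: "root_form B H \<alpha> \<delta> = 0" using part1[OF G3 \<alpha>r \<delta>] .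
    have atd: "\<alpha> t\<delta> = 0" using p1 rf_eval[OF \<alpha>D \<delta>D] unfolding t\<delta>_def by simp
    have dta: "\<delta> t\<alpha> = 0" using p1 rf_eval[OF \<delta>D \<alpha>D] rf_sym[OF \<alpha>D \<delta>D] unfolding t\<alpha>_def by simp
    have dtd: "\<delta> t\<delta> = 0" using \<delta>0 rf_eval[OF \<delta>D \<delta>D] unfolding t\<delta>_def by simp
    have ata: "\<alpha> t\<alpha> = root_form B H \<alpha> \<alpha>" using rf_eval[OF \<alpha>D \<alpha>D] unfolding t\<alpha>_def by simp
    have tb: "tvec B H \<beta> = t\<delta> + t\<alpha>" unfolding \<beta>_def t\<alpha>_def t\<delta>_def using tvec_add[OF \<delta>D \<alpha>D] .
    have atb: "\<alpha> (tvec B H \<beta>) = root_form B H \<alpha> \<alpha>"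
      unfolding tb using dual_add_H[OF \<alpha>D tH(2) tH(1)] atd ata by simp
    have qb: "root_form B H \<beta> \<beta> = root_form B H \<alpha> \<alpha>"
    proof -
      have "root_form B H \<beta> \<beta> = \<beta> (tvec B H \<beta>)" using rf_eval[OF \<beta>D \<beta>D] .
      also have "\<dots> = \<delta> (tvec B H \<beta>) + \<alpha> (tvec B H \<beta>)" unfolding \<beta>_def ..
      also have "\<delta> (tvec B H \<beta>) = 0" unfolding tb using dual_add_H[OF \<delta>D tH(2) tH(1)] dtd dta by simp
      finally show ?thesis using atb by simp
    qed
    hence q: "root_form B H \<beta> \<beta> \<noteq> 0" using A by simp
    let ?q = "root_form B H \<beta> \<beta>"
    let ?h = "sc (2 / ?q) (tvec B H \<beta>)"
    obtain e f where e: "e \<in> G \<beta>" and f: "f \<in> G (\<lambda>h. - \<beta> h)" and ef: "br e f = ?h" "br ?h e = sc 2 e" "br ?h f = sc (-2) f"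
      "\<forall>y. \<exists>n. (br e ^^ n) y = 0" "\<forall>y. \<exists>n. (br f ^^ n) y = 0"
      by (rule triple[OF G3 \<beta>r q])
    obtain g where g: "g \<in> G (\<lambda>h. - \<alpha> h)" "g \<noteq> 0" using roots_nz[OF neg_root[OF \<alpha>r]] by blast
    have hH: "?h \<in> H" using tvec_prop(1)[OF \<beta>D] H_scale by blast
    have "br ?h g = sc (- \<alpha> ?h) g" using g(1) hH unfolding G_mem by blast
    moreover have "\<alpha> ?h = 2" using dual_scale_t[OF \<alpha>D \<beta>D] atb qb A by simp
    ultimately have hg: "br ?h g = sc (-2) g" by simp
    have "br e g \<in> G (\<lambda>h. \<beta> h + - \<alpha> h)" using G_br[OF e g(1)] .
    moreover have "(\<lambda>h. \<beta> h + - \<alpha> h) = \<delta>" unfolding \<beta>_def by (simp add: fun_eq_iff)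
    ultimately have "br e g \<in> G \<delta>" by simp
    hence ucen: "br e g \<in> centralizer br (core sc br B H)" using cen by blast
    have "(\<lambda>h. - \<beta> h) \<in> nonisotropic_roots sc br B H"
      using neg_root[OF \<beta>r] rf_neg[OF \<beta>D] q unfolding nonisotropic_roots_def by simp
    hence "f \<in> core sc br B H" using core_gen f by blast
    hence "br (br e g) f = 0" using ucen unfolding centralizer_def by blast
    hence feg: "br f (br e g) = 0" using br_anti[of f "br e g"] by simp
    obtain N :: nat where "(-2::complex) = of_nat N" using sl2_weight[OF ef(1-3) hg g(2) feg ef(5)] by blast
    hence "Re (-2::complex) = Re (of_nat N)" by simp
    thus False by simp
  qed
qed

end

lemma GRL_I: "lie_algebra sc br \<Longrightarrow> GR1 sc br B \<Longrightarrow> GR2 sc br H \<Longrightarrow> GRL sc br B H"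
  by (rule GRL.intro)

theorem proposition1p4:
  fixes sc :: "complex \<Rightarrow> 'g::ab_group_add \<Rightarrow> 'g"
    and br :: "'g \<Rightarrow> 'g \<Rightarrow> 'g"
    and B :: "'g \<Rightarrow> 'g \<Rightarrow> complex"
    and H :: "'g set"
  shows "(lie_algebra sc br \<and> GR1 sc br B \<and> GR2 sc br H \<and> GR3 sc br B H \<longrightarrow>
            (\<forall>\<alpha>\<in>roots sc br H. \<forall>\<delta>\<in>isotropic_roots sc br B H. root_form B H \<alpha> \<delta> = 0))
       \<and> (generalized_reductive sc br B H \<longrightarrow>
            (\<forall>\<delta>\<in>isotropic_roots sc br B H.
               isolated_root sc br B H \<delta> \<longleftrightarrow>
               root_space sc br H \<delta> \<subseteq> centralizer br (core sc br B H)))"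
proof (intro conjI impI ballI)
  fix \<alpha> \<delta>
  assume a: "lie_algebra sc br \<and> GR1 sc br B \<and> GR2 sc br H \<and> GR3 sc br B H"
    and \<alpha>: "\<alpha> \<in> roots sc br H" and \<delta>: "\<delta> \<in> isotropic_roots sc br B H"
  have "GRL sc br B H" using a by (intro GRL_I) auto
  thus "root_form B H \<alpha> \<delta> = 0" using GRL.part1 a \<alpha> \<delta> by blast
next
  fix \<delta>
  assume a: "generalized_reductive sc br B H" and \<delta>: "\<delta> \<in> isotropic_roots sc br B H"
  have L: "GRL sc br B H" using a unfolding generalized_reductive_def by (intro GRL_I) auto
  have G3: "GR3 sc br B H" using a unfolding generalized_reductive_def by auto
  show "isolated_root sc br B H \<delta> \<longleftrightarrow> root_space sc br H \<delta> \<subseteq> centralizer br (core sc br B H)"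
    using GRL.part2_fwd[OF L] GRL.part2_bwd[OF L G3 \<delta>] by blast
qed

end
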